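(* Let $\mathbb{F}$ be any field. The support rank of the $2\times 2$ matrix multiplication tensor $\langle 2,2,2\rangle$ over $\mathbb{F}$ is $7$. That is, every tensor $t\in \mathbb{F}^{2\times 2}\otimes\mathbb{F}^{2\times 2}\otimes\mathbb{F}^{2\times 2}$ with the same support as $\langle 2,2,2\rangle$ has tensor rank at least $7$, and some such tensor has tensor rank exactly $7$.
   Context: Let $e_{ij}$ ($i,j\in\{1,2\}$) be the standard basis of the space $\mathbb{F}^{2\times 2}$ of $2\times 2$ matrices. The matrix multiplication tensor is $\langle 2,2,2\rangle=\sum_{i,j,k\in\{1,2\}} e_{ij}\otimes e_{jk}\otimes e_{ki}\in \mathbb{F}^{2\times 2}\otimes\mathbb{F}^{2\times 2}\otimes\mathbb{F}^{2\times 2}$. The tensor rank of a tensor $t$ is the smallest $r$ such that $t$ is a sum of $r$ simple tensors $v_1\otimes v_2\otimes v_3$. With respect to the fixed basis $\{e_{ab}\otimes e_{cd}\otimes e_{ef}\}$, the support of a tensor is the set of basis elements at which it has a nonzero coefficient. The support rank of $t$ is the minimal tensor rank of a tensor (over $\mathbb{F}$) having the same support as $t$. *)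

theory Defs
  imports Main
begin

text \<open>Matrix indices i,j in {1,2} are encoded by the two elements of type bool.
  A basis element e_ij of F^{2x2} is indexed by a pair (i,j) :: bool \<times> bool.
  A tensor in F^{2x2} (x) F^{2x2} (x) F^{2x2} is given by its coefficient function
  on the basis {e_ab (x) e_cd (x) e_ef}.\<close>

type_synonym midx = "bool \<times> bool"
type_synonym 'a tensor3 = "midx \<times> midx \<times> midx \<Rightarrow> 'a"

definition sum_simple :: "nat \<Rightarrow> (nat \<Rightarrow> midx \<Rightarrow> 'a::field) \<Rightarrow> (nat \<Rightarrow> midx \<Rightarrow> 'a)
     \<Rightarrow> (nat \<Rightarrow> midx \<Rightarrow> 'a) \<Rightarrow> 'a tensor3" where
  "sum_simple r u v w = (\<lambda>(x, y, z). \<Sum>k<r. u k x * v k y * w k z)"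

definition tensor_rank :: "'a::field tensor3 \<Rightarrow> nat" where
  "tensor_rank t = (LEAST r. \<exists>u v w. t = sum_simple r u v w)"

definition supp :: "'a::field tensor3 \<Rightarrow> (midx \<times> midx \<times> midx) set" where
  "supp t = {p. t p \<noteq> 0}"

definition support_rank :: "'a::field tensor3 \<Rightarrow> nat" where
  "support_rank t = (LEAST r. \<exists>s :: 'a tensor3. supp s = supp t \<and> tensor_rank s = r)"

text \<open>The matrix multiplication tensor <2,2,2> = sum_{i,j,k} e_ij (x) e_jk (x) e_ki.\<close>
definition matmul222 :: "'a::field tensor3" where
  "matmul222 = (\<lambda>((a, b), (c, d), (e, f)). if b = c \<and> d = e \<and> f = a then 1 else 0)"

end

theory Submission
  imports Defs "Jordan_Normal_Form.Determinant"
begin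


definition dot :: "(midx \<Rightarrow> 'a::field) \<Rightarrow> (midx \<Rightarrow> 'a) \<Rightarrow> 'a" where
  "dot f X = (\<Sum>x\<in>UNIV. f x * X x)"

lemma UNIV_midx: "(UNIV :: midx set) = {(False,False),(False,True),(True,False),(True,True)}"
  by (auto simp: UNIV_bool)

lemma sum_midx: "(\<Sum>x\<in>(UNIV::midx set). g x) = g (False,False) + g (False,True) + g (True,False) + g (True,True)"
  unfolding UNIV_midx by (simp add: add.assoc)

definition idx :: "midx \<Rightarrow> nat" where "idx x = (if fst x then 2 else 0) + (if snd x then 1 else 0)"
definition unidx :: "nat \<Rightarrow> midx" where "unidx n = (2 \<le> n, n mod 2 = 1)"

lemma idx_unidx: "j < 4 \<Longrightarrow> idx (unidx j) = j"
  unfolding idx_def unidx_def by (cases j; cases "j-1"; cases "j-2"; cases "j - 3"; auto)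

lemma sum4: "(\<Sum>j\<in>{0..<4::nat}. f j) = f 0 + f 1 + f 2 + f 3"
  by (simp add: eval_nat_numeral add.assoc)

lemma LA3:
  fixes r0 r1 r2 :: "midx \<Rightarrow> 'a::field"
  shows "\<exists>X. X \<noteq> (\<lambda>_. 0) \<and> dot r0 X = 0 \<and> dot r1 X = 0 \<and> dot r2 X = 0"
proof -
  define c where "c = (\<lambda>i::nat. vec 4 (\<lambda>j. if i = 0 then r0 (unidx j) else if i = 1 then r1 (unidx j) else r2 (unidx j)))"
  define A where "A = mat\<^sub>r 4 4 (\<lambda>i. if i = 3 then 0\<^sub>v 4 else c i)"
  have "det A = 0" unfolding A_def
    by (rule det_row_0) (auto simp: c_def)
  moreover have A: "A \<in> carrier_mat 4 4" unfolding A_def by simp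
  ultimately obtain v where v: "v \<in> carrier_vec 4" "v \<noteq> 0\<^sub>v 4" "A *\<^sub>v v = 0\<^sub>v 4"
    using det_0_iff_vec_prod_zero_field[OF A] by auto
  define X where "X = (\<lambda>x. v $ idx x)"
  have row: "dot r X = 0" if "r = (\<lambda>x. if i = 0 then r0 x else if i = 1 then r1 x else r2 x)" "i < 3" for r and i :: nat
  proof -
    have "(A *\<^sub>v v) $ i = 0" using v(3) that(2) by simp
    moreover have "(A *\<^sub>v v) $ i = row A i \<bullet> v" using that(2) A by simp
    moreover have "row A i = c i" unfolding A_def using that(2) by (simp add: c_def)
    ultimately have "c i \<bullet> v = 0" by simp
    then show ?thesis using v(1) that
      by (auto simp: scalar_prod_def c_def dot_def sum_midx X_def idx_def unidx_def sum4)
  qed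
  have "dot r0 X = 0" using row[of _ 0] by simp
  moreover have "dot r1 X = 0" using row[of _ 1] by simp
  moreover have "dot r2 X = 0" using row[of _ 2] by simp
  moreover have "X \<noteq> (\<lambda>_. 0)"
  proof
    assume "X = (\<lambda>_. 0)"
    then have "\<forall>j<4. v $ j = 0" unfolding X_def
      by (metis idx_unidx)
    then show False using v(1,2) by (auto simp: vec_eq_iff)
  qed
  ultimately show ?thesis by blast
qed


definition E :: "midx \<Rightarrow> midx \<Rightarrow> 'a::field" where "E y0 = (\<lambda>y. if y = y0 then 1 else 0)"

lemma dot_E[simp]: "dot f (E y0) = f y0"
  unfolding dot_def E_def sum_midx by (cases y0; auto)

definition perm6 :: "nat \<Rightarrow> nat \<Rightarrow> nat \<Rightarrow> nat \<Rightarrow> nat \<Rightarrow> nat \<Rightarrow> bool" where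
  "perm6 a b c p q r \<longleftrightarrow> distinct [a,b,c,p,q,r] \<and> set [a,b,c,p,q,r] = {..<6}"

lemma sum6: "perm6 a b c p q r \<Longrightarrow> (\<Sum>l<6. g l) = g a + g b + g c + g p + g q + g r"
proof -
  assume "perm6 a b c p q r"
  then have d: "distinct [a,b,c,p,q,r]" and s: "{..<6} = set [a,b,c,p,q,r]" unfolding perm6_def by auto
  have "(\<Sum>l<6. g l) = sum g (set [a,b,c,p,q,r])" using s by simp
  also have "\<dots> = sum_list (map g [a,b,c,p,q,r])" by (rule sum_list_distinct_conv_sum_set[OF d, symmetric])
  finally show ?thesis by (simp add: add.assoc)
qed

locale dec6 =
  fixes s :: "'a::field tensor3" and u v w :: "nat \<Rightarrow> midx \<Rightarrow> 'a"
  assumes pat: "\<And>a b c d e f. s ((a,b),(c,d),(e,f)) \<noteq> 0 \<longleftrightarrow> (b = c \<and> d = e \<and> f = a)"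
  and dec: "\<And>x y z. s (x,y,z) = (\<Sum>l<6. u l x * v l y * w l z)"
begin

lemma s_off: "\<not>(b = c \<and> d = e \<and> f = a) \<Longrightarrow> s ((a,b),(c,d),(e,f)) = 0"
  using pat[of a b c d e f] by blast

lemma cnz: "s ((i,j),(j,k),(k,i)) \<noteq> 0"
  using pat[of i j j k k i] by blast

definition tauC :: "(midx \<Rightarrow> 'a) \<Rightarrow> (midx \<Rightarrow> 'a) \<Rightarrow> midx \<Rightarrow> 'a" where
  "tauC X Y z = (\<Sum>x\<in>UNIV. \<Sum>y\<in>UNIV. X x * Y y * s (x,y,z))"
definition tauB :: "(midx \<Rightarrow> 'a) \<Rightarrow> (midx \<Rightarrow> 'a) \<Rightarrow> midx \<Rightarrow> 'a" where
  "tauB X Z y = (\<Sum>x\<in>UNIV. \<Sum>z\<in>UNIV. X x * Z z * s (x,y,z))"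

lemma tauC_pat: "tauC X Y (k,i) = X(i,False)*Y(False,k)*s((i,False),(False,k),(k,i)) + X(i,True)*Y(True,k)*s((i,True),(True,k),(k,i))"
  unfolding tauC_def sum_midx by (cases i; cases k; simp add: s_off)

lemma tauB_pat: "tauB X Z (j,k) = X(False,j)*Z(k,False)*s((False,j),(j,k),(k,False)) + X(True,j)*Z(k,True)*s((True,j),(j,k),(k,True))"
  unfolding tauB_def sum_midx by (cases j; cases k; simp add: s_off)

lemma tauC_dec: "tauC X Y z = (\<Sum>l<6. dot (u l) X * dot (v l) Y * w l z)"
proof -
  have "tauC X Y z = (\<Sum>x\<in>UNIV. \<Sum>y\<in>UNIV. \<Sum>l<6. X x * Y y * (u l x * v l y * w l z))"
    by (simp add: tauC_def dec sum_distrib_left)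
  also have "\<dots> = (\<Sum>x\<in>UNIV. \<Sum>l<6. \<Sum>y\<in>UNIV. X x * Y y * (u l x * v l y * w l z))"
    by (rule sum.cong[OF refl], rule sum.swap)
  also have "\<dots> = (\<Sum>l<6. \<Sum>x\<in>UNIV. \<Sum>y\<in>UNIV. X x * Y y * (u l x * v l y * w l z))"
    by (rule sum.swap)
  also have "\<dots> = (\<Sum>l<6. dot (u l) X * dot (v l) Y * w l z)"
    unfolding dot_def sum_product sum_distrib_right by (intro sum.cong refl) (simp add: mult_ac sum_distrib_left)
  finally show ?thesis .
qed

lemma tauB_dec: "tauB X Z y = (\<Sum>l<6. dot (u l) X * dot (w l) Z * v l y)"
proof -
  have "tauB X Z y = (\<Sum>x\<in>UNIV. \<Sum>z\<in>UNIV. \<Sum>l<6. X x * Z z * (u l x * v l y * w l z))"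
    by (simp add: tauB_def dec sum_distrib_left)
  also have "\<dots> = (\<Sum>x\<in>UNIV. \<Sum>l<6. \<Sum>z\<in>UNIV. X x * Z z * (u l x * v l y * w l z))"
    by (rule sum.cong[OF refl], rule sum.swap)
  also have "\<dots> = (\<Sum>l<6. \<Sum>x\<in>UNIV. \<Sum>z\<in>UNIV. X x * Z z * (u l x * v l y * w l z))"
    by (rule sum.swap)
  also have "\<dots> = (\<Sum>l<6. dot (u l) X * dot (w l) Z * v l y)"
    unfolding dot_def sum_product sum_distrib_right by (intro sum.cong refl) (simp add: mult_ac sum_distrib_left)
  finally show ?thesis .
qed

end


lemma two_by_two:
  fixes x y a1 b1 a2 b2 :: "'a::field"
  assumes "x * a1 + y * b1 = 0" "x * a2 + y * b2 = 0" "a1 * b2 - a2 * b1 \<noteq> 0"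
  shows "x = 0 \<and> y = 0"
proof -
  have "x * (a1 * b2 - a2 * b1) = b2 * (x * a1 + y * b1) - b1 * (x * a2 + y * b2)" by (simp add: algebra_simps)
  then have x: "x = 0" using assms by simp
  have "y * (a1 * b2 - a2 * b1) = a1 * (x * a2 + y * b2) - a2 * (x * a1 + y * b1)" by (simp add: algebra_simps)
  then have "y = 0" using assms by simp
  with x show ?thesis by simp
qed

lemma nonzero_fun: "X \<noteq> (\<lambda>_. 0) \<Longrightarrow> \<exists>i j. X (i,j) \<noteq> 0"
  by (metis prod.exhaust ext)

lemma Act:
  fixes oo :: "midx \<Rightarrow> midx \<Rightarrow> 'a::field"
  assumes P: "perm6 a b c p q r" and oo: "\<And>m z. oo m z = (\<Sum>l<6. \<beta> m l * f l z)"
    and z: "\<And>m. \<beta> m a = 0" "\<And>m. \<beta> m b = 0" "\<And>m. \<beta> m c = 0"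
  shows "\<exists>\<gamma>. \<gamma> \<noteq> (\<lambda>_. 0) \<and> (\<forall>z. (\<Sum>m\<in>UNIV. \<gamma> m * oo m z) = 0)"
proof -
  obtain \<gamma> where g: "\<gamma> \<noteq> (\<lambda>_. 0)" "dot (\<lambda>m. \<beta> m p) \<gamma> = 0" "dot (\<lambda>m. \<beta> m q) \<gamma> = 0" "dot (\<lambda>m. \<beta> m r) \<gamma> = 0"
    using LA3 by blast
  have o2: "oo m z = \<beta> m p * f p z + \<beta> m q * f q z + \<beta> m r * f r z" for m z
    using oo[of m z, unfolded sum6[OF P]] z by simp
  have "(\<Sum>m\<in>UNIV. \<gamma> m * oo m z) = dot (\<lambda>m. \<beta> m p) \<gamma> * f p z + dot (\<lambda>m. \<beta> m q) \<gamma> * f q z + dot (\<lambda>m. \<beta> m r) \<gamma> * f r z" for z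
    unfolding o2 dot_def sum_midx by (simp add: algebra_simps)
  then show ?thesis using g by auto
qed

lemma perm6_sym:
  "perm6 a b c p q r \<Longrightarrow> perm6 b c a p q r"
  "perm6 a b c p q r \<Longrightarrow> perm6 b a c p q r"
  "perm6 a b c p q r \<Longrightarrow> perm6 a b c q r p"
  "perm6 a b c p q r \<Longrightarrow> perm6 a b c q p r"
  "perm6 a b c p q r \<Longrightarrow> perm6 p q r a b c"
  unfolding perm6_def by auto

context dec6 begin

definition cA :: "bool \<Rightarrow> (midx \<Rightarrow> 'a) \<Rightarrow> bool \<Rightarrow> bool \<Rightarrow> 'a" where
  "cA k X i j = s((i,j),(j,k),(k,i)) * X (i,j)"

lemma tauC_E: "tauC X (E (j,k)) (k',i) = (if k' = k then cA k X i j else 0)"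
  unfolding tauC_pat cA_def E_def by (cases j; cases k; cases k'; simp)

lemma tauB_E: "tauB X (E (k,i)) (j,k') = (if k' = k then cA k X i j else 0)"
  unfolding tauB_pat cA_def E_def by (cases i; cases k; cases k'; simp)

lemma cA_0: "cA k X i j = 0 \<longleftrightarrow> X (i,j) = 0"
  unfolding cA_def using cnz by simp

lemma sum_block: "(\<Sum>m\<in>(UNIV::midx set). (\<gamma> m::'a) * (if fst m = k then g m else 0)) = \<gamma>(k,False) * g (k,False) + \<gamma>(k,True) * g (k,True)"
proof (cases k)
  case True then show ?thesis by (simp add: sum_midx)
next
  case False then show ?thesis by (simp add: sum_midx)
qed

lemma no5:
  assumes P: "perm6 a b c p q r" and X: "X \<noteq> (\<lambda>_. 0)"
    and o: "dot (u a) X = 0" "dot (u b) X = 0" "dot (u c) X = 0" "dot (u p) X = 0" "dot (u q) X = 0"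
  shows False
proof -
  obtain i j where ij: "X (i,j) \<noteq> 0" using nonzero_fun[OF X] by blast
  have t: "tauC X (E (j,k)) z = dot (u r) X * v r (j,k) * w r z" for k z
    unfolding tauC_dec sum6[OF P] using o by simp
  have 1: "tauC X (E(j,False)) (False,i) \<noteq> 0" unfolding tauC_E using ij cA_0 by simp
  have 2: "tauC X (E(j,True)) (False,i) = 0" unfolding tauC_E by simp
  have 3: "tauC X (E(j,True)) (True,i) \<noteq> 0" unfolding tauC_E using ij cA_0 by simp
  from 1 have "w r (False,i) \<noteq> 0" unfolding t by simp
  with 2 have "dot (u r) X * v r (j,True) = 0" unfolding t by simp
  with 3 show False unfolding t by simp
qed


lemma sum_block2: "(\<Sum>m\<in>(UNIV::midx set). (\<gamma> m::'a) * (if k = fst m then g m else 0)) = \<gamma>(k,False) * g (k,False) + \<gamma>(k,True) * g (k,True)"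
proof (cases k)
  case True then show ?thesis by (simp add: sum_midx)
next
  case False then show ?thesis by (simp add: sum_midx)
qed

lemma cA_z: "X (i,j) = 0 \<Longrightarrow> cA k X i j = 0"
  unfolding cA_def by simp

lemma gamma_zero: "(\<And>k. \<gamma> (k,False) = 0 \<and> \<gamma> (k,True) = 0) \<Longrightarrow> \<gamma> = (\<lambda>_. 0)"
  by (rule ext, metis prod.exhaust)

lemma L1core:
  assumes P: "perm6 a b c p q r" and X1: "X1 z0 \<noteq> 0" and X2: "X2 z0 = 0" "X2 \<noteq> (\<lambda>_. 0)"
    and o1: "dot (u a) X1 = 0" "dot (u b) X1 = 0" "dot (u c) X1 = 0"
    and o2: "dot (u a) X2 = 0" "dot (u b) X2 = 0" "dot (u c) X2 = 0"
  shows False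
proof -
  define Xs where "Xs p = (if p then X2 else X1)" for p :: bool
  have oXs: "dot (u a) (Xs p) = 0" "dot (u b) (Xs p) = 0" "dot (u c) (Xs p) = 0" for p
    using o1 o2 by (simp_all add: Xs_def)
  define colDet where "colDet k p j p' j' = cA k (Xs p) False j * cA k (Xs p') True j' - cA k (Xs p) True j * cA k (Xs p') False j'" for k p j p' j'
  define rowDet where "rowDet k p i p' i' = cA k (Xs p) i False * cA k (Xs p') i' True - cA k (Xs p) i True * cA k (Xs p') i' False" for k p i p' i'
  obtain i0 j0 where z0: "z0 = (i0,j0)" by (cases z0)
  have X1': "X1 (i0,j0) \<noteq> 0" and X2': "X2 (i0,j0) = 0" using X1 X2 z0 by auto
  have dich: False if nc: "\<forall>p j p' j'. colDet k p j p' j' = 0" and nr: "\<forall>p i p' i'. rowDet k' p i p' i' = 0" for k k'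
  proof -
    have e1: "X2 (\<not>i0, j0) = 0"
      using nc[rule_format, of False j0 True j0] X1' X2'
      unfolding colDet_def Xs_def by (cases i0) (auto simp: cA_z cA_0)
    have e2: "X2 (i0, \<not>j0) = 0"
      using nr[rule_format, of False i0 True i0] X1' X2'
      unfolding rowDet_def Xs_def by (cases j0) (auto simp: cA_z cA_0)
    have e3: "X2 (\<not>i0, \<not>j0) = 0"
      using nc[rule_format, of True "\<not>j0" False j0] X1' X2' e2
      unfolding colDet_def Xs_def by (cases i0) (auto simp: cA_z cA_0)
    have "X2 = (\<lambda>_. 0)"
    proof (rule ext)
      fix x :: midx
      obtain i j where x: "x = (i,j)" by (cases x)
      show "X2 x = 0" using X2' e1 e2 e3 unfolding x by (cases "i = i0"; cases "j = j0"; auto)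
    qed
    with X2 show False by simp
  qed
  have "(\<forall>k. \<exists>p j p' j'. colDet k p j p' j' \<noteq> 0) \<or> (\<forall>k. \<exists>p i p' i'. rowDet k p i p' i' \<noteq> 0)"
    using dich by blast
  then show False
  proof
    assume C: "\<forall>k. \<exists>p j p' j'. colDet k p j p' j' \<noteq> 0"
    obtain p1 j1 p1' j1' where c1: "colDet False p1 j1 p1' j1' \<noteq> 0" using C by blast
    obtain p2 j2 p2' j2' where c2: "colDet True p2 j2 p2' j2' \<noteq> 0" using C by blast
    define Pk where "Pk k t = (if k then (if t then p2' else p2) else (if t then p1' else p1))" for k t
    define Jk where "Jk k t = (if k then (if t then j2' else j2) else (if t then j1' else j1))" for k t
    have cd: "colDet k (Pk k False) (Jk k False) (Pk k True) (Jk k True) \<noteq> 0" for k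
      by (cases k) (simp_all add: Pk_def Jk_def c1 c2)
    define oo where "oo m = tauC (Xs (Pk (fst m) (snd m))) (E (Jk (fst m) (snd m), fst m))" for m
    obtain \<gamma> where g: "\<gamma> \<noteq> (\<lambda>_. 0)" "\<forall>z. (\<Sum>m\<in>UNIV. \<gamma> m * oo m z) = 0"
      using Act[OF P, of oo "\<lambda>m l. dot (u l) (Xs (Pk (fst m) (snd m))) * dot (v l) (E (Jk (fst m) (snd m), fst m))" w]
      by (auto simp: oo_def tauC_dec oXs)
    have "\<gamma> (k,False) = 0 \<and> \<gamma> (k,True) = 0" for k
    proof -
      have eq: "\<gamma>(k,False) * cA k (Xs (Pk k False)) i (Jk k False) + \<gamma>(k,True) * cA k (Xs (Pk k True)) i (Jk k True) = 0" for i
        using g(2)[rule_format, of "(k,i)"] unfolding oo_def tauC_E sum_block2 by simp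
      show ?thesis
        using two_by_two[OF eq[of False] eq[of True]] cd[of k] unfolding colDet_def by simp
    qed
    then have "\<gamma> = (\<lambda>_. 0)" by (rule gamma_zero)
    with g show False by simp
  next
    assume R: "\<forall>k. \<exists>p i p' i'. rowDet k p i p' i' \<noteq> 0"
    obtain p1 j1 p1' j1' where c1: "rowDet False p1 j1 p1' j1' \<noteq> 0" using R by blast
    obtain p2 j2 p2' j2' where c2: "rowDet True p2 j2 p2' j2' \<noteq> 0" using R by blast
    define Pk where "Pk k t = (if k then (if t then p2' else p2) else (if t then p1' else p1))" for k t
    define Ik where "Ik k t = (if k then (if t then j2' else j2) else (if t then j1' else j1))" for k t
    have cd: "rowDet k (Pk k False) (Ik k False) (Pk k True) (Ik k True) \<noteq> 0" for k
      by (cases k) (simp_all add: Pk_def Ik_def c1 c2)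
    define oo where "oo m = tauB (Xs (Pk (fst m) (snd m))) (E (fst m, Ik (fst m) (snd m)))" for m
    obtain \<gamma> where g: "\<gamma> \<noteq> (\<lambda>_. 0)" "\<forall>z. (\<Sum>m\<in>UNIV. \<gamma> m * oo m z) = 0"
      using Act[OF P, of oo "\<lambda>m l. dot (u l) (Xs (Pk (fst m) (snd m))) * dot (w l) (E (fst m, Ik (fst m) (snd m)))" v]
      by (auto simp: oo_def tauB_dec oXs)
    have "\<gamma> (k,False) = 0 \<and> \<gamma> (k,True) = 0" for k
    proof -
      have eq: "\<gamma>(k,False) * cA k (Xs (Pk k False)) (Ik k False) j + \<gamma>(k,True) * cA k (Xs (Pk k True)) (Ik k True) j = 0" for j
        using g(2)[rule_format, of "(j,k)"] unfolding oo_def tauB_E sum_block2 by simp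
      show ?thesis
        using two_by_two[OF eq[of False] eq[of True]] cd[of k] unfolding rowDet_def by simp
    qed
    then have "\<gamma> = (\<lambda>_. 0)" by (rule gamma_zero)
    with g show False by simp
  qed
qed

end


lemma dot_E2[simp]: "dot (E y0) X = X y0"
  unfolding dot_def E_def sum_midx by (cases y0; auto)

lemma dot_lin: "dot f (\<lambda>z. X z - c * Y z) = dot f X - c * dot f Y"
  unfolding dot_def sum_midx by (simp add: algebra_simps)

lemma ex_nz: "X \<noteq> (\<lambda>_. 0) \<Longrightarrow> \<exists>z. X z \<noteq> 0"
  by (auto simp: fun_eq_iff)

lemma ker2:
  fixes a11 a12 a21 a22 :: "'a::field"
  assumes d: "a11 * a22 - a12 * a21 = 0"
  shows "\<exists>x y. (x \<noteq> 0 \<or> y \<noteq> 0) \<and> a11 * x + a12 * y = 0 \<and> a21 * x + a22 * y = 0"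
proof (cases "a11 \<noteq> 0 \<or> a12 \<noteq> 0")
  case True
  have e1: "a11 * a12 + a12 * (- a11) = 0" by simp
  have e2: "a21 * a12 + a22 * (- a11) = 0"
  proof -
    have "a21 * a12 + a22 * (- a11) = - (a11 * a22 - a12 * a21)" by (simp add: algebra_simps)
    then show ?thesis using d by simp
  qed
  have "a12 \<noteq> 0 \<or> - a11 \<noteq> 0" using True by auto
  with e1 e2 show ?thesis by blast
next
  case False
  then have z: "a11 = 0" "a12 = 0" by auto
  show ?thesis
  proof (cases "a21 \<noteq> 0 \<or> a22 \<noteq> 0")
    case True
    have e2: "a21 * a22 + a22 * (- a21) = 0" by simp
    have "a22 \<noteq> 0 \<or> - a21 \<noteq> 0" using True by auto
    with e2 z show ?thesis by (rule_tac x=a22 in exI, rule_tac x="-a21" in exI) simp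
  next
    case False2: False
    then have "a21 = 0" "a22 = 0" by auto
    with z show ?thesis by (rule_tac x=1 in exI, rule_tac x=0 in exI) simp
  qed
qed

context dec6 begin

lemma uniq:
  assumes P: "perm6 a b c p q r" and X: "X \<noteq> (\<lambda>_. 0)"
    and o1: "dot (u a) X = 0" "dot (u b) X = 0" "dot (u c) X = 0"
    and o2: "dot (u a) X' = 0" "dot (u b) X' = 0" "dot (u c) X' = 0"
  shows "\<exists>lam. X' = (\<lambda>z. lam * X z)"
proof -
  obtain z0 where z0: "X z0 \<noteq> 0" using ex_nz[OF X] by blast
  define lam where "lam = X' z0 / X z0"
  define X2 where "X2 = (\<lambda>z. X' z - lam * X z)"
  have X2z: "X2 z0 = 0" using z0 by (simp add: X2_def lam_def)
  have oa: "dot (u a) X2 = 0" unfolding X2_def dot_lin using o1 o2 by simp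
  have ob: "dot (u b) X2 = 0" unfolding X2_def dot_lin using o1 o2 by simp
  have oc: "dot (u c) X2 = 0" unfolding X2_def dot_lin using o1 o2 by simp
  have Z: "X2 = (\<lambda>_. 0)"
  proof (rule ccontr)
    assume "X2 \<noteq> (\<lambda>_. 0)"
    from L1core[of a b c p q r X z0 X2, OF P z0 X2z this o1 oa ob oc] show False .
  qed
  have "X' = (\<lambda>z. lam * X z)"
  proof (rule ext)
    fix z
    have "X2 z = 0" using Z by simp
    then show "X' z = lam * X z" unfolding X2_def by simp
  qed
  then show ?thesis by blast
qed

lemma indep_c:
  assumes P: "perm6 a b c p q r" and L: "\<forall>x. ga * u a x + gb * u b x + gc * u c x = 0" and gc: "gc \<noteq> 0"
  shows False
proof -
  obtain X1 where X1: "X1 \<noteq> (\<lambda>_. 0)" "dot (u a) X1 = 0" "dot (u b) X1 = 0" using LA3[of "u a" "u b" "u b"] by blast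
  obtain z0 where z0: "X1 z0 \<noteq> 0" using ex_nz[OF X1(1)] by blast
  obtain X2 where X2: "X2 \<noteq> (\<lambda>_. 0)" "dot (u a) X2 = 0" "dot (u b) X2 = 0" "dot (E z0) X2 = 0" using LA3[of "u a" "u b" "E z0"] by blast
  have dc: "dot (u c) X = 0" if "dot (u a) X = 0" "dot (u b) X = 0" for X
  proof -
    have "ga * dot (u a) X + gb * dot (u b) X + gc * dot (u c) X = (\<Sum>x\<in>UNIV. (ga * u a x + gb * u b x + gc * u c x) * X x)"
      unfolding dot_def by (simp add: sum_distrib_left sum.distrib algebra_simps)
    also have "\<dots> = 0" by (rule sum.neutral) (simp add: L[rule_format])
    finally show ?thesis using that gc by simp
  qed
  show False using L1core[of a b c p q r X1 z0 X2, OF P z0] X1 X2 dc by simp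
qed

lemma indep:
  assumes P: "perm6 a b c p q r" and L: "\<forall>x. ga * u a x + gb * u b x + gc * u c x = 0"
  shows "ga = 0 \<and> gb = 0 \<and> gc = 0"
proof -
  have "gc = 0" using indep_c[OF P L] by blast
  moreover have "gb = 0"
  proof -
    have P': "perm6 a c b p q r" using P unfolding perm6_def by auto
    have "\<forall>x. ga * u a x + gc * u c x + gb * u b x = 0" using L by (simp add: algebra_simps)
    then show ?thesis using indep_c[OF P'] by blast
  qed
  moreover have "ga = 0"
  proof -
    have P': "perm6 c b a p q r" using P unfolding perm6_def by auto
    have "\<forall>x. gc * u c x + gb * u b x + ga * u a x = 0" using L by (simp add: algebra_simps)
    then show ?thesis using indep_c[OF P'] by blast
  qed
  ultimately show ?thesis by simp
qed

lemma supp2: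
  assumes P: "perm6 a b c p q r" and S: "\<And>l x. l \<in> {a,b,c} \<Longrightarrow> x \<noteq> z1 \<Longrightarrow> x \<noteq> z2 \<Longrightarrow> u l x = 0"
  shows False
proof -
  define r0 where "r0 = (\<lambda>m. if m = (False,False) then u a z1 else if m = (False,True) then u b z1 else if m = (True,False) then u c z1 else 0)"
  define r1 where "r1 = (\<lambda>m. if m = (False,False) then u a z2 else if m = (False,True) then u b z2 else if m = (True,False) then u c z2 else 0)"
  obtain \<gamma> where g: "\<gamma> \<noteq> (\<lambda>_. 0)" "dot r0 \<gamma> = 0" "dot r1 \<gamma> = 0" "dot (E (True,True)) \<gamma> = 0"
    using LA3 by blast
  have "\<forall>x. \<gamma> (False,False) * u a x + \<gamma> (False,True) * u b x + \<gamma> (True,False) * u c x = 0"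
  proof
    fix x
    show "\<gamma> (False,False) * u a x + \<gamma> (False,True) * u b x + \<gamma> (True,False) * u c x = 0"
    proof (cases "x = z1 \<or> x = z2")
      case True
      have d0: "dot r0 \<gamma> = \<gamma> (False,False) * u a z1 + \<gamma> (False,True) * u b z1 + \<gamma> (True,False) * u c z1"
        unfolding r0_def dot_def sum_midx by (simp add: mult.commute)
      have d1: "dot r1 \<gamma> = \<gamma> (False,False) * u a z2 + \<gamma> (False,True) * u b z2 + \<gamma> (True,False) * u c z2"
        unfolding r1_def dot_def sum_midx by (simp add: mult.commute)
      from True show ?thesis using g(2,3) unfolding d0 d1 by auto
    next
      case False
      then show ?thesis using S by auto
    qed
  qed
  from indep[OF P this] g(4) have "\<gamma> = (\<lambda>_. 0)"
    by (intro ext) (metis (full_types) dot_E2 prod.exhaust)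
  with g show False by simp
qed

end

definition rot :: "'a tensor3 \<Rightarrow> 'a tensor3" where "rot s = (\<lambda>(x,y,z). s (z,x,y))"

lemma dec6_rot: assumes "dec6 s u v w" shows "dec6 (rot s) v w u"
proof -
  interpret dec6 s u v w by fact
  show ?thesis
  proof
    fix a b c d e f show "rot s ((a,b),(c,d),(e,f)) \<noteq> 0 \<longleftrightarrow> (b = c \<and> d = e \<and> f = a)"
      unfolding rot_def using pat[of e f a b c d] by auto
  next
    fix x y z show "rot s (x,y,z) = (\<Sum>l<6. v l x * w l y * u l z)"
      unfolding rot_def using dec[of z x y] by (simp add: mult_ac)
  qed
qed



lemma dot_scale: "dot f (\<lambda>z. c * X z) = c * dot f X"
  unfolding dot_def sum_midx by (simp add: algebra_simps)

context dec6 begin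

definition vanS :: "nat set \<Rightarrow> bool" where
  "vanS F \<longleftrightarrow> (\<exists>X. X \<noteq> (\<lambda>_. 0) \<and> (\<forall>l\<in>F. dot (u l) X = 0))"

lemma G1:
  assumes P: "perm6 a b c p q r" and F: "F = {a,b,c,p}" and F': "F' = {a,b,c,q}"
  shows "\<not> (vanS F \<and> vanS F')"
proof
  assume "vanS F \<and> vanS F'"
  then obtain X X' where X: "X \<noteq> (\<lambda>_. 0)" "\<forall>l\<in>{a,b,c,p}. dot (u l) X = 0"
    and X': "X' \<noteq> (\<lambda>_. 0)" "\<forall>l\<in>{a,b,c,q}. dot (u l) X' = 0"
    unfolding vanS_def F F' by blast
  obtain lam where lam: "X' = (\<lambda>z. lam * X z)"
    using uniq[OF P X(1)] X(2) X'(2) by auto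
  have "lam \<noteq> 0" using X'(1) lam by auto
  moreover have "lam * dot (u q) X = 0" using X'(2) lam dot_scale by (metis insertI1 insert_commute)
  ultimately have "dot (u q) X = 0" by simp
  with no5[OF P X(1)] X(2) show False by simp
qed

end

lemma L3:
  assumes D: "dec6 s u v w" and P: "perm6 a b c p q r"
    and simple: "\<And>X. X \<noteq> (\<lambda>_. 0) \<Longrightarrow> dot (u a) X = 0 \<Longrightarrow> dot (u b) X = 0 \<Longrightarrow> dot (u c) X = 0 \<Longrightarrow>
       dot (u p) X \<noteq> 0 \<and> dot (u q) X \<noteq> 0 \<and> dot (u r) X \<noteq> 0"
  shows "\<exists>Y. Y \<noteq> (\<lambda>_. 0) \<and> dot (v p) Y = 0 \<and> dot (v q) Y = 0 \<and> dot (v r) Y = 0 \<and>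
          (dot (v a) Y = 0 \<or> dot (v b) Y = 0 \<or> dot (v c) Y = 0)"
proof -
  interpret A: dec6 s u v w by (rule D)
  interpret C: dec6 "rot (rot s)" w u v by (rule dec6_rot[OF dec6_rot[OF D]])
  obtain X where X: "X \<noteq> (\<lambda>_. 0)" "dot (u a) X = 0" "dot (u b) X = 0" "dot (u c) X = 0"
    using LA3 by blast
  have al: "dot (u p) X \<noteq> 0" "dot (u q) X \<noteq> 0" "dot (u r) X \<noteq> 0" using simple[OF X] by auto
  define detA where "detA k = A.cA k X False False * A.cA k X True True - A.cA k X True False * A.cA k X False True" for k
  have "\<exists>k. detA k = 0"
  proof (rule ccontr)
    assume nd: "\<not> (\<exists>k. detA k = 0)"
    define oo where "oo m = A.tauC X (E (snd m, fst m))" for m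
    obtain \<gamma> where g: "\<gamma> \<noteq> (\<lambda>_. 0)" "\<forall>z. (\<Sum>m\<in>UNIV. \<gamma> m * oo m z) = 0"
      using Act[OF P, of oo "\<lambda>m l. dot (u l) X * dot (v l) (E (snd m, fst m))" w]
      by (auto simp: oo_def A.tauC_dec X)
    have "\<gamma> (k,False) = 0 \<and> \<gamma> (k,True) = 0" for k
    proof -
      have eq: "\<gamma>(k,False) * A.cA k X i False + \<gamma>(k,True) * A.cA k X i True = 0" for i
        using g(2)[rule_format, of "(k,i)"] unfolding oo_def A.tauC_E A.sum_block2 by simp
      show ?thesis using two_by_two[OF eq[of False] eq[of True]] nd unfolding detA_def by auto
    qed
    then have "\<gamma> = (\<lambda>_. 0)" by (rule A.gamma_zero)
    with g show False by simp
  qed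
  then obtain k where dk: "detA k = 0" by blast
  obtain \<kappa>1 \<kappa>2 where kap: "\<kappa>1 \<noteq> 0 \<or> \<kappa>2 \<noteq> 0"
      "A.cA k X False False * \<kappa>1 + A.cA k X False True * \<kappa>2 = 0"
      "A.cA k X True False * \<kappa>1 + A.cA k X True True * \<kappa>2 = 0"
    using ker2[of "A.cA k X False False" "A.cA k X True True" "A.cA k X False True" "A.cA k X True False"]
      dk unfolding detA_def by (auto simp: mult.commute)
  define Y0 where "Y0 = (\<lambda>y::midx. if snd y = k then (if fst y then \<kappa>2 else \<kappa>1) else 0)"
  have Y0nz: "Y0 \<noteq> (\<lambda>_. 0)"
  proof
    assume "Y0 = (\<lambda>_. 0)"
    then have "Y0 (False,k) = 0" "Y0 (True,k) = 0" by auto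
    with kap(1) show False unfolding Y0_def by simp
  qed
  have tz: "A.tauC X Y0 z = 0" for z
  proof -
    obtain k' i where z: "z = (k',i)" by (cases z)
    show ?thesis
    proof (cases "k' = k")
      case True
      have "A.tauC X Y0 z = A.cA k X i False * \<kappa>1 + A.cA k X i True * \<kappa>2"
        unfolding z A.tauC_pat Y0_def A.cA_def using True by (simp add: mult_ac)
      then show ?thesis using kap(2,3) by (cases i) simp_all
    next
      case False
      then show ?thesis unfolding z A.tauC_pat Y0_def by simp
    qed
  qed
  have vT: "dot (v p) Y0 = 0 \<and> dot (v q) Y0 = 0 \<and> dot (v r) Y0 = 0"
  proof -
    have "\<forall>x. (dot (u p) X * dot (v p) Y0) * w p x + (dot (u q) X * dot (v q) Y0) * w q x + (dot (u r) X * dot (v r) Y0) * w r x = 0"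
    proof
      fix x
      show "(dot (u p) X * dot (v p) Y0) * w p x + (dot (u q) X * dot (v q) Y0) * w q x + (dot (u r) X * dot (v r) Y0) * w r x = 0"
        using tz[of x] unfolding A.tauC_dec sum6[OF P] using X by simp
    qed
    from C.indep[OF perm6_sym(5)[OF P] this] al show ?thesis by simp
  qed
  have "dot (v a) Y0 = 0 \<or> dot (v b) Y0 = 0 \<or> dot (v c) Y0 = 0"
  proof (rule ccontr)
    assume nz: "\<not> (dot (v a) Y0 = 0 \<or> dot (v b) Y0 = 0 \<or> dot (v c) Y0 = 0)"
    have w0: "w l (\<not>k, i) = 0" if l: "l \<in> {a,b,c}" for l i
    proof -
      have "\<forall>x. (dot (v a) Y0 * w a (\<not>k,i)) * u a x + (dot (v b) Y0 * w b (\<not>k,i)) * u b x + (dot (v c) Y0 * w c (\<not>k,i)) * u c x = 0"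
      proof
        fix x
        have "A.tauC (E x) Y0 (\<not>k, i) = 0" unfolding A.tauC_pat Y0_def by simp
        then show "(dot (v a) Y0 * w a (\<not>k,i)) * u a x + (dot (v b) Y0 * w b (\<not>k,i)) * u b x + (dot (v c) Y0 * w c (\<not>k,i)) * u c x = 0"
          unfolding A.tauC_dec sum6[OF P] using vT by (simp add: mult_ac)
      qed
      from A.indep[OF P this] nz l show ?thesis by auto
    qed
    have S: "w l x = 0" if "l \<in> {a,b,c}" "x \<noteq> (k,False)" "x \<noteq> (k,True)" for l x
    proof -
      obtain k'' i where x: "x = (k'',i)" by (cases x)
      have "k'' = (\<not>k)" using that(2,3) x by (cases i) auto
      then show ?thesis using w0[OF that(1)] x by simp
    qed
    show False using C.supp2[OF P S] by blast
  qed
  then show ?thesis using Y0nz vT by blast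
qed

lemma L3_set:
  assumes D: "dec6 s u v w" and P: "perm6 a b c p q r"
    and "F1 = {a,b,c,p}" "F2 = {a,b,c,q}" "F3 = {a,b,c,r}" "G1 = {p,q,r,a}" "G2 = {p,q,r,b}" "G3 = {p,q,r,c}"
  shows "dec6.vanS u F1 \<or> dec6.vanS u F2 \<or> dec6.vanS u F3 \<or> dec6.vanS v G1 \<or> dec6.vanS v G2 \<or> dec6.vanS v G3"
proof (rule ccontr)
  assume N: "\<not> ?thesis"
  have "dot (u p) X \<noteq> 0 \<and> dot (u q) X \<noteq> 0 \<and> dot (u r) X \<noteq> 0"
    if "X \<noteq> (\<lambda>_. 0)" "dot (u a) X = 0" "dot (u b) X = 0" "dot (u c) X = 0" for X
    using N that unfolding dec6.vanS_def[OF D] assms(3-8) by auto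
  from L3[OF D P this] obtain Y where "Y \<noteq> (\<lambda>_. 0)" "dot (v p) Y = 0" "dot (v q) Y = 0" "dot (v r) Y = 0"
    "dot (v a) Y = 0 \<or> dot (v b) Y = 0 \<or> dot (v c) Y = 0" by blast
  then show False using N dec6.vanS_def[OF dec6_rot[OF D]] unfolding assms(3-8) by auto
qed



lemma lt6: "{..<6::nat} = {0,1,2,3,4,5}"
  by (auto simp: eval_nat_numeral lessThan_Suc)

lemma comb:
  fixes A0123 A0124 A0125 A0134 A0135 A0145 A0234 A0235 A0245 A0345 A1234 A1235 A1245 A1345 A2345 B0123 B0124 B0125 B0134 B0135 B0145 B0234 B0235 B0245 B0345 B1234 B1235 B1245 B1345 B2345 :: bool
  assumes "\<not> (A0123 \<and> A0124)"
    and "\<not> (A0123 \<and> A0125)"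
    and "\<not> (A0124 \<and> A0125)"
    and "\<not> (A0123 \<and> A0134)"
    and "\<not> (A0123 \<and> A0135)"
    and "\<not> (A0134 \<and> A0135)"
    and "\<not> (A0124 \<and> A0134)"
    and "\<not> (A0124 \<and> A0145)"
    and "\<not> (A0134 \<and> A0145)"
    and "\<not> (A0125 \<and> A0135)"
    and "\<not> (A0125 \<and> A0145)"
    and "\<not> (A0135 \<and> A0145)"
    and "\<not> (A0123 \<and> A0234)"
    and "\<not> (A0123 \<and> A0235)"
    and "\<not> (A0234 \<and> A0235)"
    and "\<not> (A0124 \<and> A0234)"
    and "\<not> (A0124 \<and> A0245)"
    and "\<not> (A0234 \<and> A0245)"
    and "\<not> (A0125 \<and> A0235)"
    and "\<not> (A0125 \<and> A0245)"
    and "\<not> (A0235 \<and> A0245)"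
    and "\<not> (A0134 \<and> A0234)"
    and "\<not> (A0134 \<and> A0345)"
    and "\<not> (A0234 \<and> A0345)"
    and "\<not> (A0135 \<and> A0235)"
    and "\<not> (A0135 \<and> A0345)"
    and "\<not> (A0235 \<and> A0345)"
    and "\<not> (A0145 \<and> A0245)"
    and "\<not> (A0145 \<and> A0345)"
    and "\<not> (A0245 \<and> A0345)"
    and "\<not> (A0123 \<and> A1234)"
    and "\<not> (A0123 \<and> A1235)"
    and "\<not> (A1234 \<and> A1235)"
    and "\<not> (A0124 \<and> A1234)"
    and "\<not> (A0124 \<and> A1245)"
    and "\<not> (A1234 \<and> A1245)"
    and "\<not> (A0125 \<and> A1235)"
    and "\<not> (A0125 \<and> A1245)"
    and "\<not> (A1235 \<and> A1245)"
    and "\<not> (A0134 \<and> A1234)"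
    and "\<not> (A0134 \<and> A1345)"
    and "\<not> (A1234 \<and> A1345)"
    and "\<not> (A0135 \<and> A1235)"
    and "\<not> (A0135 \<and> A1345)"
    and "\<not> (A1235 \<and> A1345)"
    and "\<not> (A0145 \<and> A1245)"
    and "\<not> (A0145 \<and> A1345)"
    and "\<not> (A1245 \<and> A1345)"
    and "\<not> (A0234 \<and> A1234)"
    and "\<not> (A0234 \<and> A2345)"
    and "\<not> (A1234 \<and> A2345)"
    and "\<not> (A0235 \<and> A1235)"
    and "\<not> (A0235 \<and> A2345)"
    and "\<not> (A1235 \<and> A2345)"
    and "\<not> (A0245 \<and> A1245)"
    and "\<not> (A0245 \<and> A2345)"
    and "\<not> (A1245 \<and> A2345)"
    and "\<not> (A0345 \<and> A1345)"
    and "\<not> (A0345 \<and> A2345)"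
    and "\<not> (A1345 \<and> A2345)"
    and "\<not> (B0123 \<and> B0124)"
    and "\<not> (B0123 \<and> B0125)"
    and "\<not> (B0124 \<and> B0125)"
    and "\<not> (B0123 \<and> B0134)"
    and "\<not> (B0123 \<and> B0135)"
    and "\<not> (B0134 \<and> B0135)"
    and "\<not> (B0124 \<and> B0134)"
    and "\<not> (B0124 \<and> B0145)"
    and "\<not> (B0134 \<and> B0145)"
    and "\<not> (B0125 \<and> B0135)"
    and "\<not> (B0125 \<and> B0145)"
    and "\<not> (B0135 \<and> B0145)"
    and "\<not> (B0123 \<and> B0234)"
    and "\<not> (B0123 \<and> B0235)"
    and "\<not> (B0234 \<and> B0235)"
    and "\<not> (B0124 \<and> B0234)"
    and "\<not> (B0124 \<and> B0245)"
    and "\<not> (B0234 \<and> B0245)"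
    and "\<not> (B0125 \<and> B0235)"
    and "\<not> (B0125 \<and> B0245)"
    and "\<not> (B0235 \<and> B0245)"
    and "\<not> (B0134 \<and> B0234)"
    and "\<not> (B0134 \<and> B0345)"
    and "\<not> (B0234 \<and> B0345)"
    and "\<not> (B0135 \<and> B0235)"
    and "\<not> (B0135 \<and> B0345)"
    and "\<not> (B0235 \<and> B0345)"
    and "\<not> (B0145 \<and> B0245)"
    and "\<not> (B0145 \<and> B0345)"
    and "\<not> (B0245 \<and> B0345)"
    and "\<not> (B0123 \<and> B1234)"
    and "\<not> (B0123 \<and> B1235)"
    and "\<not> (B1234 \<and> B1235)"
    and "\<not> (B0124 \<and> B1234)"
    and "\<not> (B0124 \<and> B1245)"
    and "\<not> (B1234 \<and> B1245)"
    and "\<not> (B0125 \<and> B1235)"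
    and "\<not> (B0125 \<and> B1245)"
    and "\<not> (B1235 \<and> B1245)"
    and "\<not> (B0134 \<and> B1234)"
    and "\<not> (B0134 \<and> B1345)"
    and "\<not> (B1234 \<and> B1345)"
    and "\<not> (B0135 \<and> B1235)"
    and "\<not> (B0135 \<and> B1345)"
    and "\<not> (B1235 \<and> B1345)"
    and "\<not> (B0145 \<and> B1245)"
    and "\<not> (B0145 \<and> B1345)"
    and "\<not> (B1245 \<and> B1345)"
    and "\<not> (B0234 \<and> B1234)"
    and "\<not> (B0234 \<and> B2345)"
    and "\<not> (B1234 \<and> B2345)"
    and "\<not> (B0235 \<and> B1235)"
    and "\<not> (B0235 \<and> B2345)"
    and "\<not> (B1235 \<and> B2345)"
    and "\<not> (B0245 \<and> B1245)"
    and "\<not> (B0245 \<and> B2345)"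
    and "\<not> (B1245 \<and> B2345)"
    and "\<not> (B0345 \<and> B1345)"
    and "\<not> (B0345 \<and> B2345)"
    and "\<not> (B1345 \<and> B2345)"
    and "A0123 \<or> A0124 \<or> A0125 \<or> B0345 \<or> B1345 \<or> B2345"
    and "A0123 \<or> A0134 \<or> A0135 \<or> B0245 \<or> B1245 \<or> B2345"
    and "A0124 \<or> A0134 \<or> A0145 \<or> B0235 \<or> B1235 \<or> B2345"
    and "A0125 \<or> A0135 \<or> A0145 \<or> B0234 \<or> B1234 \<or> B2345"
    and "A0123 \<or> A0234 \<or> A0235 \<or> B0145 \<or> B1245 \<or> B1345"
    and "A0124 \<or> A0234 \<or> A0245 \<or> B0135 \<or> B1235 \<or> B1345"
    and "A0125 \<or> A0235 \<or> A0245 \<or> B0134 \<or> B1234 \<or> B1345"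
    and "A0134 \<or> A0234 \<or> A0345 \<or> B0125 \<or> B1235 \<or> B1245"
    and "A0135 \<or> A0235 \<or> A0345 \<or> B0124 \<or> B1234 \<or> B1245"
    and "A0145 \<or> A0245 \<or> A0345 \<or> B0123 \<or> B1234 \<or> B1235"
    and "A0123 \<or> A1234 \<or> A1235 \<or> B0145 \<or> B0245 \<or> B0345"
    and "A0124 \<or> A1234 \<or> A1245 \<or> B0135 \<or> B0235 \<or> B0345"
    and "A0125 \<or> A1235 \<or> A1245 \<or> B0134 \<or> B0234 \<or> B0345"
    and "A0134 \<or> A1234 \<or> A1345 \<or> B0125 \<or> B0235 \<or> B0245"
    and "A0135 \<or> A1235 \<or> A1345 \<or> B0124 \<or> B0234 \<or> B0245"
    and "A0145 \<or> A1245 \<or> A1345 \<or> B0123 \<or> B0234 \<or> B0235"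
    and "A0234 \<or> A1234 \<or> A2345 \<or> B0125 \<or> B0135 \<or> B0145"
    and "A0235 \<or> A1235 \<or> A2345 \<or> B0124 \<or> B0134 \<or> B0145"
    and "A0245 \<or> A1245 \<or> A2345 \<or> B0123 \<or> B0134 \<or> B0135"
    and "A0345 \<or> A1345 \<or> A2345 \<or> B0123 \<or> B0124 \<or> B0125"
  shows False
  using assms by sat

lemma no6:
  assumes D: "dec6 s u v w"
  shows False
proof -
  interpret A: dec6 s u v w by (rule D)
  interpret B: dec6 "rot s" v w u by (rule dec6_rot[OF D])
  have h1: "\<not> (A.vanS {0,1,2,3} \<and> A.vanS {0,1,2,4})"
    by (rule A.G1[of 0 1 2 3 4 5]) (auto simp: perm6_def lt6)
  have h2: "\<not> (A.vanS {0,1,2,3} \<and> A.vanS {0,1,2,5})"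
    by (rule A.G1[of 0 1 2 3 5 4]) (auto simp: perm6_def lt6)
  have h3: "\<not> (A.vanS {0,1,2,4} \<and> A.vanS {0,1,2,5})"
    by (rule A.G1[of 0 1 2 4 5 3]) (auto simp: perm6_def lt6)
  have h4: "\<not> (A.vanS {0,1,2,3} \<and> A.vanS {0,1,3,4})"
    by (rule A.G1[of 0 1 3 2 4 5]) (auto simp: perm6_def lt6)
  have h5: "\<not> (A.vanS {0,1,2,3} \<and> A.vanS {0,1,3,5})"
    by (rule A.G1[of 0 1 3 2 5 4]) (auto simp: perm6_def lt6)
  have h6: "\<not> (A.vanS {0,1,3,4} \<and> A.vanS {0,1,3,5})"
    by (rule A.G1[of 0 1 3 4 5 2]) (auto simp: perm6_def lt6)
  have h7: "\<not> (A.vanS {0,1,2,4} \<and> A.vanS {0,1,3,4})"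
    by (rule A.G1[of 0 1 4 2 3 5]) (auto simp: perm6_def lt6)
  have h8: "\<not> (A.vanS {0,1,2,4} \<and> A.vanS {0,1,4,5})"
    by (rule A.G1[of 0 1 4 2 5 3]) (auto simp: perm6_def lt6)
  have h9: "\<not> (A.vanS {0,1,3,4} \<and> A.vanS {0,1,4,5})"
    by (rule A.G1[of 0 1 4 3 5 2]) (auto simp: perm6_def lt6)
  have h10: "\<not> (A.vanS {0,1,2,5} \<and> A.vanS {0,1,3,5})"
    by (rule A.G1[of 0 1 5 2 3 4]) (auto simp: perm6_def lt6)
  have h11: "\<not> (A.vanS {0,1,2,5} \<and> A.vanS {0,1,4,5})"
    by (rule A.G1[of 0 1 5 2 4 3]) (auto simp: perm6_def lt6)
  have h12: "\<not> (A.vanS {0,1,3,5} \<and> A.vanS {0,1,4,5})"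
    by (rule A.G1[of 0 1 5 3 4 2]) (auto simp: perm6_def lt6)
  have h13: "\<not> (A.vanS {0,1,2,3} \<and> A.vanS {0,2,3,4})"
    by (rule A.G1[of 0 2 3 1 4 5]) (auto simp: perm6_def lt6)
  have h14: "\<not> (A.vanS {0,1,2,3} \<and> A.vanS {0,2,3,5})"
    by (rule A.G1[of 0 2 3 1 5 4]) (auto simp: perm6_def lt6)
  have h15: "\<not> (A.vanS {0,2,3,4} \<and> A.vanS {0,2,3,5})"
    by (rule A.G1[of 0 2 3 4 5 1]) (auto simp: perm6_def lt6)
  have h16: "\<not> (A.vanS {0,1,2,4} \<and> A.vanS {0,2,3,4})"
    by (rule A.G1[of 0 2 4 1 3 5]) (auto simp: perm6_def lt6)
  have h17: "\<not> (A.vanS {0,1,2,4} \<and> A.vanS {0,2,4,5})"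
    by (rule A.G1[of 0 2 4 1 5 3]) (auto simp: perm6_def lt6)
  have h18: "\<not> (A.vanS {0,2,3,4} \<and> A.vanS {0,2,4,5})"
    by (rule A.G1[of 0 2 4 3 5 1]) (auto simp: perm6_def lt6)
  have h19: "\<not> (A.vanS {0,1,2,5} \<and> A.vanS {0,2,3,5})"
    by (rule A.G1[of 0 2 5 1 3 4]) (auto simp: perm6_def lt6)
  have h20: "\<not> (A.vanS {0,1,2,5} \<and> A.vanS {0,2,4,5})"
    by (rule A.G1[of 0 2 5 1 4 3]) (auto simp: perm6_def lt6)
  have h21: "\<not> (A.vanS {0,2,3,5} \<and> A.vanS {0,2,4,5})"
    by (rule A.G1[of 0 2 5 3 4 1]) (auto simp: perm6_def lt6)
  have h22: "\<not> (A.vanS {0,1,3,4} \<and> A.vanS {0,2,3,4})"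
    by (rule A.G1[of 0 3 4 1 2 5]) (auto simp: perm6_def lt6)
  have h23: "\<not> (A.vanS {0,1,3,4} \<and> A.vanS {0,3,4,5})"
    by (rule A.G1[of 0 3 4 1 5 2]) (auto simp: perm6_def lt6)
  have h24: "\<not> (A.vanS {0,2,3,4} \<and> A.vanS {0,3,4,5})"
    by (rule A.G1[of 0 3 4 2 5 1]) (auto simp: perm6_def lt6)
  have h25: "\<not> (A.vanS {0,1,3,5} \<and> A.vanS {0,2,3,5})"
    by (rule A.G1[of 0 3 5 1 2 4]) (auto simp: perm6_def lt6)
  have h26: "\<not> (A.vanS {0,1,3,5} \<and> A.vanS {0,3,4,5})"
    by (rule A.G1[of 0 3 5 1 4 2]) (auto simp: perm6_def lt6)
  have h27: "\<not> (A.vanS {0,2,3,5} \<and> A.vanS {0,3,4,5})"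
    by (rule A.G1[of 0 3 5 2 4 1]) (auto simp: perm6_def lt6)
  have h28: "\<not> (A.vanS {0,1,4,5} \<and> A.vanS {0,2,4,5})"
    by (rule A.G1[of 0 4 5 1 2 3]) (auto simp: perm6_def lt6)
  have h29: "\<not> (A.vanS {0,1,4,5} \<and> A.vanS {0,3,4,5})"
    by (rule A.G1[of 0 4 5 1 3 2]) (auto simp: perm6_def lt6)
  have h30: "\<not> (A.vanS {0,2,4,5} \<and> A.vanS {0,3,4,5})"
    by (rule A.G1[of 0 4 5 2 3 1]) (auto simp: perm6_def lt6)
  have h31: "\<not> (A.vanS {0,1,2,3} \<and> A.vanS {1,2,3,4})"
    by (rule A.G1[of 1 2 3 0 4 5]) (auto simp: perm6_def lt6)
  have h32: "\<not> (A.vanS {0,1,2,3} \<and> A.vanS {1,2,3,5})"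
    by (rule A.G1[of 1 2 3 0 5 4]) (auto simp: perm6_def lt6)
  have h33: "\<not> (A.vanS {1,2,3,4} \<and> A.vanS {1,2,3,5})"
    by (rule A.G1[of 1 2 3 4 5 0]) (auto simp: perm6_def lt6)
  have h34: "\<not> (A.vanS {0,1,2,4} \<and> A.vanS {1,2,3,4})"
    by (rule A.G1[of 1 2 4 0 3 5]) (auto simp: perm6_def lt6)
  have h35: "\<not> (A.vanS {0,1,2,4} \<and> A.vanS {1,2,4,5})"
    by (rule A.G1[of 1 2 4 0 5 3]) (auto simp: perm6_def lt6)
  have h36: "\<not> (A.vanS {1,2,3,4} \<and> A.vanS {1,2,4,5})"
    by (rule A.G1[of 1 2 4 3 5 0]) (auto simp: perm6_def lt6)
  have h37: "\<not> (A.vanS {0,1,2,5} \<and> A.vanS {1,2,3,5})"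
    by (rule A.G1[of 1 2 5 0 3 4]) (auto simp: perm6_def lt6)
  have h38: "\<not> (A.vanS {0,1,2,5} \<and> A.vanS {1,2,4,5})"
    by (rule A.G1[of 1 2 5 0 4 3]) (auto simp: perm6_def lt6)
  have h39: "\<not> (A.vanS {1,2,3,5} \<and> A.vanS {1,2,4,5})"
    by (rule A.G1[of 1 2 5 3 4 0]) (auto simp: perm6_def lt6)
  have h40: "\<not> (A.vanS {0,1,3,4} \<and> A.vanS {1,2,3,4})"
    by (rule A.G1[of 1 3 4 0 2 5]) (auto simp: perm6_def lt6)
  have h41: "\<not> (A.vanS {0,1,3,4} \<and> A.vanS {1,3,4,5})"
    by (rule A.G1[of 1 3 4 0 5 2]) (auto simp: perm6_def lt6)
  have h42: "\<not> (A.vanS {1,2,3,4} \<and> A.vanS {1,3,4,5})"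
    by (rule A.G1[of 1 3 4 2 5 0]) (auto simp: perm6_def lt6)
  have h43: "\<not> (A.vanS {0,1,3,5} \<and> A.vanS {1,2,3,5})"
    by (rule A.G1[of 1 3 5 0 2 4]) (auto simp: perm6_def lt6)
  have h44: "\<not> (A.vanS {0,1,3,5} \<and> A.vanS {1,3,4,5})"
    by (rule A.G1[of 1 3 5 0 4 2]) (auto simp: perm6_def lt6)
  have h45: "\<not> (A.vanS {1,2,3,5} \<and> A.vanS {1,3,4,5})"
    by (rule A.G1[of 1 3 5 2 4 0]) (auto simp: perm6_def lt6)
  have h46: "\<not> (A.vanS {0,1,4,5} \<and> A.vanS {1,2,4,5})"
    by (rule A.G1[of 1 4 5 0 2 3]) (auto simp: perm6_def lt6)
  have h47: "\<not> (A.vanS {0,1,4,5} \<and> A.vanS {1,3,4,5})"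
    by (rule A.G1[of 1 4 5 0 3 2]) (auto simp: perm6_def lt6)
  have h48: "\<not> (A.vanS {1,2,4,5} \<and> A.vanS {1,3,4,5})"
    by (rule A.G1[of 1 4 5 2 3 0]) (auto simp: perm6_def lt6)
  have h49: "\<not> (A.vanS {0,2,3,4} \<and> A.vanS {1,2,3,4})"
    by (rule A.G1[of 2 3 4 0 1 5]) (auto simp: perm6_def lt6)
  have h50: "\<not> (A.vanS {0,2,3,4} \<and> A.vanS {2,3,4,5})"
    by (rule A.G1[of 2 3 4 0 5 1]) (auto simp: perm6_def lt6)
  have h51: "\<not> (A.vanS {1,2,3,4} \<and> A.vanS {2,3,4,5})"
    by (rule A.G1[of 2 3 4 1 5 0]) (auto simp: perm6_def lt6)
  have h52: "\<not> (A.vanS {0,2,3,5} \<and> A.vanS {1,2,3,5})"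
    by (rule A.G1[of 2 3 5 0 1 4]) (auto simp: perm6_def lt6)
  have h53: "\<not> (A.vanS {0,2,3,5} \<and> A.vanS {2,3,4,5})"
    by (rule A.G1[of 2 3 5 0 4 1]) (auto simp: perm6_def lt6)
  have h54: "\<not> (A.vanS {1,2,3,5} \<and> A.vanS {2,3,4,5})"
    by (rule A.G1[of 2 3 5 1 4 0]) (auto simp: perm6_def lt6)
  have h55: "\<not> (A.vanS {0,2,4,5} \<and> A.vanS {1,2,4,5})"
    by (rule A.G1[of 2 4 5 0 1 3]) (auto simp: perm6_def lt6)
  have h56: "\<not> (A.vanS {0,2,4,5} \<and> A.vanS {2,3,4,5})"
    by (rule A.G1[of 2 4 5 0 3 1]) (auto simp: perm6_def lt6)
  have h57: "\<not> (A.vanS {1,2,4,5} \<and> A.vanS {2,3,4,5})"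
    by (rule A.G1[of 2 4 5 1 3 0]) (auto simp: perm6_def lt6)
  have h58: "\<not> (A.vanS {0,3,4,5} \<and> A.vanS {1,3,4,5})"
    by (rule A.G1[of 3 4 5 0 1 2]) (auto simp: perm6_def lt6)
  have h59: "\<not> (A.vanS {0,3,4,5} \<and> A.vanS {2,3,4,5})"
    by (rule A.G1[of 3 4 5 0 2 1]) (auto simp: perm6_def lt6)
  have h60: "\<not> (A.vanS {1,3,4,5} \<and> A.vanS {2,3,4,5})"
    by (rule A.G1[of 3 4 5 1 2 0]) (auto simp: perm6_def lt6)
  have h61: "\<not> (B.vanS {0,1,2,3} \<and> B.vanS {0,1,2,4})"
    by (rule B.G1[of 0 1 2 3 4 5]) (auto simp: perm6_def lt6)
  have h62: "\<not> (B.vanS {0,1,2,3} \<and> B.vanS {0,1,2,5})"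
    by (rule B.G1[of 0 1 2 3 5 4]) (auto simp: perm6_def lt6)
  have h63: "\<not> (B.vanS {0,1,2,4} \<and> B.vanS {0,1,2,5})"
    by (rule B.G1[of 0 1 2 4 5 3]) (auto simp: perm6_def lt6)
  have h64: "\<not> (B.vanS {0,1,2,3} \<and> B.vanS {0,1,3,4})"
    by (rule B.G1[of 0 1 3 2 4 5]) (auto simp: perm6_def lt6)
  have h65: "\<not> (B.vanS {0,1,2,3} \<and> B.vanS {0,1,3,5})"
    by (rule B.G1[of 0 1 3 2 5 4]) (auto simp: perm6_def lt6)
  have h66: "\<not> (B.vanS {0,1,3,4} \<and> B.vanS {0,1,3,5})"
    by (rule B.G1[of 0 1 3 4 5 2]) (auto simp: perm6_def lt6)
  have h67: "\<not> (B.vanS {0,1,2,4} \<and> B.vanS {0,1,3,4})"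
    by (rule B.G1[of 0 1 4 2 3 5]) (auto simp: perm6_def lt6)
  have h68: "\<not> (B.vanS {0,1,2,4} \<and> B.vanS {0,1,4,5})"
    by (rule B.G1[of 0 1 4 2 5 3]) (auto simp: perm6_def lt6)
  have h69: "\<not> (B.vanS {0,1,3,4} \<and> B.vanS {0,1,4,5})"
    by (rule B.G1[of 0 1 4 3 5 2]) (auto simp: perm6_def lt6)
  have h70: "\<not> (B.vanS {0,1,2,5} \<and> B.vanS {0,1,3,5})"
    by (rule B.G1[of 0 1 5 2 3 4]) (auto simp: perm6_def lt6)
  have h71: "\<not> (B.vanS {0,1,2,5} \<and> B.vanS {0,1,4,5})"
    by (rule B.G1[of 0 1 5 2 4 3]) (auto simp: perm6_def lt6)
  have h72: "\<not> (B.vanS {0,1,3,5} \<and> B.vanS {0,1,4,5})"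
    by (rule B.G1[of 0 1 5 3 4 2]) (auto simp: perm6_def lt6)
  have h73: "\<not> (B.vanS {0,1,2,3} \<and> B.vanS {0,2,3,4})"
    by (rule B.G1[of 0 2 3 1 4 5]) (auto simp: perm6_def lt6)
  have h74: "\<not> (B.vanS {0,1,2,3} \<and> B.vanS {0,2,3,5})"
    by (rule B.G1[of 0 2 3 1 5 4]) (auto simp: perm6_def lt6)
  have h75: "\<not> (B.vanS {0,2,3,4} \<and> B.vanS {0,2,3,5})"
    by (rule B.G1[of 0 2 3 4 5 1]) (auto simp: perm6_def lt6)
  have h76: "\<not> (B.vanS {0,1,2,4} \<and> B.vanS {0,2,3,4})"
    by (rule B.G1[of 0 2 4 1 3 5]) (auto simp: perm6_def lt6)
  have h77: "\<not> (B.vanS {0,1,2,4} \<and> B.vanS {0,2,4,5})"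
    by (rule B.G1[of 0 2 4 1 5 3]) (auto simp: perm6_def lt6)
  have h78: "\<not> (B.vanS {0,2,3,4} \<and> B.vanS {0,2,4,5})"
    by (rule B.G1[of 0 2 4 3 5 1]) (auto simp: perm6_def lt6)
  have h79: "\<not> (B.vanS {0,1,2,5} \<and> B.vanS {0,2,3,5})"
    by (rule B.G1[of 0 2 5 1 3 4]) (auto simp: perm6_def lt6)
  have h80: "\<not> (B.vanS {0,1,2,5} \<and> B.vanS {0,2,4,5})"
    by (rule B.G1[of 0 2 5 1 4 3]) (auto simp: perm6_def lt6)
  have h81: "\<not> (B.vanS {0,2,3,5} \<and> B.vanS {0,2,4,5})"
    by (rule B.G1[of 0 2 5 3 4 1]) (auto simp: perm6_def lt6)
  have h82: "\<not> (B.vanS {0,1,3,4} \<and> B.vanS {0,2,3,4})"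
    by (rule B.G1[of 0 3 4 1 2 5]) (auto simp: perm6_def lt6)
  have h83: "\<not> (B.vanS {0,1,3,4} \<and> B.vanS {0,3,4,5})"
    by (rule B.G1[of 0 3 4 1 5 2]) (auto simp: perm6_def lt6)
  have h84: "\<not> (B.vanS {0,2,3,4} \<and> B.vanS {0,3,4,5})"
    by (rule B.G1[of 0 3 4 2 5 1]) (auto simp: perm6_def lt6)
  have h85: "\<not> (B.vanS {0,1,3,5} \<and> B.vanS {0,2,3,5})"
    by (rule B.G1[of 0 3 5 1 2 4]) (auto simp: perm6_def lt6)
  have h86: "\<not> (B.vanS {0,1,3,5} \<and> B.vanS {0,3,4,5})"
    by (rule B.G1[of 0 3 5 1 4 2]) (auto simp: perm6_def lt6)
  have h87: "\<not> (B.vanS {0,2,3,5} \<and> B.vanS {0,3,4,5})"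
    by (rule B.G1[of 0 3 5 2 4 1]) (auto simp: perm6_def lt6)
  have h88: "\<not> (B.vanS {0,1,4,5} \<and> B.vanS {0,2,4,5})"
    by (rule B.G1[of 0 4 5 1 2 3]) (auto simp: perm6_def lt6)
  have h89: "\<not> (B.vanS {0,1,4,5} \<and> B.vanS {0,3,4,5})"
    by (rule B.G1[of 0 4 5 1 3 2]) (auto simp: perm6_def lt6)
  have h90: "\<not> (B.vanS {0,2,4,5} \<and> B.vanS {0,3,4,5})"
    by (rule B.G1[of 0 4 5 2 3 1]) (auto simp: perm6_def lt6)
  have h91: "\<not> (B.vanS {0,1,2,3} \<and> B.vanS {1,2,3,4})"
    by (rule B.G1[of 1 2 3 0 4 5]) (auto simp: perm6_def lt6)
  have h92: "\<not> (B.vanS {0,1,2,3} \<and> B.vanS {1,2,3,5})"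
    by (rule B.G1[of 1 2 3 0 5 4]) (auto simp: perm6_def lt6)
  have h93: "\<not> (B.vanS {1,2,3,4} \<and> B.vanS {1,2,3,5})"
    by (rule B.G1[of 1 2 3 4 5 0]) (auto simp: perm6_def lt6)
  have h94: "\<not> (B.vanS {0,1,2,4} \<and> B.vanS {1,2,3,4})"
    by (rule B.G1[of 1 2 4 0 3 5]) (auto simp: perm6_def lt6)
  have h95: "\<not> (B.vanS {0,1,2,4} \<and> B.vanS {1,2,4,5})"
    by (rule B.G1[of 1 2 4 0 5 3]) (auto simp: perm6_def lt6)
  have h96: "\<not> (B.vanS {1,2,3,4} \<and> B.vanS {1,2,4,5})"
    by (rule B.G1[of 1 2 4 3 5 0]) (auto simp: perm6_def lt6)
  have h97: "\<not> (B.vanS {0,1,2,5} \<and> B.vanS {1,2,3,5})"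
    by (rule B.G1[of 1 2 5 0 3 4]) (auto simp: perm6_def lt6)
  have h98: "\<not> (B.vanS {0,1,2,5} \<and> B.vanS {1,2,4,5})"
    by (rule B.G1[of 1 2 5 0 4 3]) (auto simp: perm6_def lt6)
  have h99: "\<not> (B.vanS {1,2,3,5} \<and> B.vanS {1,2,4,5})"
    by (rule B.G1[of 1 2 5 3 4 0]) (auto simp: perm6_def lt6)
  have h100: "\<not> (B.vanS {0,1,3,4} \<and> B.vanS {1,2,3,4})"
    by (rule B.G1[of 1 3 4 0 2 5]) (auto simp: perm6_def lt6)
  have h101: "\<not> (B.vanS {0,1,3,4} \<and> B.vanS {1,3,4,5})"
    by (rule B.G1[of 1 3 4 0 5 2]) (auto simp: perm6_def lt6)
  have h102: "\<not> (B.vanS {1,2,3,4} \<and> B.vanS {1,3,4,5})"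
    by (rule B.G1[of 1 3 4 2 5 0]) (auto simp: perm6_def lt6)
  have h103: "\<not> (B.vanS {0,1,3,5} \<and> B.vanS {1,2,3,5})"
    by (rule B.G1[of 1 3 5 0 2 4]) (auto simp: perm6_def lt6)
  have h104: "\<not> (B.vanS {0,1,3,5} \<and> B.vanS {1,3,4,5})"
    by (rule B.G1[of 1 3 5 0 4 2]) (auto simp: perm6_def lt6)
  have h105: "\<not> (B.vanS {1,2,3,5} \<and> B.vanS {1,3,4,5})"
    by (rule B.G1[of 1 3 5 2 4 0]) (auto simp: perm6_def lt6)
  have h106: "\<not> (B.vanS {0,1,4,5} \<and> B.vanS {1,2,4,5})"
    by (rule B.G1[of 1 4 5 0 2 3]) (auto simp: perm6_def lt6)
  have h107: "\<not> (B.vanS {0,1,4,5} \<and> B.vanS {1,3,4,5})"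
    by (rule B.G1[of 1 4 5 0 3 2]) (auto simp: perm6_def lt6)
  have h108: "\<not> (B.vanS {1,2,4,5} \<and> B.vanS {1,3,4,5})"
    by (rule B.G1[of 1 4 5 2 3 0]) (auto simp: perm6_def lt6)
  have h109: "\<not> (B.vanS {0,2,3,4} \<and> B.vanS {1,2,3,4})"
    by (rule B.G1[of 2 3 4 0 1 5]) (auto simp: perm6_def lt6)
  have h110: "\<not> (B.vanS {0,2,3,4} \<and> B.vanS {2,3,4,5})"
    by (rule B.G1[of 2 3 4 0 5 1]) (auto simp: perm6_def lt6)
  have h111: "\<not> (B.vanS {1,2,3,4} \<and> B.vanS {2,3,4,5})"
    by (rule B.G1[of 2 3 4 1 5 0]) (auto simp: perm6_def lt6)
  have h112: "\<not> (B.vanS {0,2,3,5} \<and> B.vanS {1,2,3,5})"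
    by (rule B.G1[of 2 3 5 0 1 4]) (auto simp: perm6_def lt6)
  have h113: "\<not> (B.vanS {0,2,3,5} \<and> B.vanS {2,3,4,5})"
    by (rule B.G1[of 2 3 5 0 4 1]) (auto simp: perm6_def lt6)
  have h114: "\<not> (B.vanS {1,2,3,5} \<and> B.vanS {2,3,4,5})"
    by (rule B.G1[of 2 3 5 1 4 0]) (auto simp: perm6_def lt6)
  have h115: "\<not> (B.vanS {0,2,4,5} \<and> B.vanS {1,2,4,5})"
    by (rule B.G1[of 2 4 5 0 1 3]) (auto simp: perm6_def lt6)
  have h116: "\<not> (B.vanS {0,2,4,5} \<and> B.vanS {2,3,4,5})"
    by (rule B.G1[of 2 4 5 0 3 1]) (auto simp: perm6_def lt6)
  have h117: "\<not> (B.vanS {1,2,4,5} \<and> B.vanS {2,3,4,5})"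
    by (rule B.G1[of 2 4 5 1 3 0]) (auto simp: perm6_def lt6)
  have h118: "\<not> (B.vanS {0,3,4,5} \<and> B.vanS {1,3,4,5})"
    by (rule B.G1[of 3 4 5 0 1 2]) (auto simp: perm6_def lt6)
  have h119: "\<not> (B.vanS {0,3,4,5} \<and> B.vanS {2,3,4,5})"
    by (rule B.G1[of 3 4 5 0 2 1]) (auto simp: perm6_def lt6)
  have h120: "\<not> (B.vanS {1,3,4,5} \<and> B.vanS {2,3,4,5})"
    by (rule B.G1[of 3 4 5 1 2 0]) (auto simp: perm6_def lt6)
  have h121: "A.vanS {0,1,2,3} \<or> A.vanS {0,1,2,4} \<or> A.vanS {0,1,2,5} \<or> B.vanS {0,3,4,5} \<or> B.vanS {1,3,4,5} \<or> B.vanS {2,3,4,5}"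
    by (rule L3_set[OF D, of 0 1 2 3 4 5]) (auto simp: perm6_def lt6)
  have h122: "A.vanS {0,1,2,3} \<or> A.vanS {0,1,3,4} \<or> A.vanS {0,1,3,5} \<or> B.vanS {0,2,4,5} \<or> B.vanS {1,2,4,5} \<or> B.vanS {2,3,4,5}"
    by (rule L3_set[OF D, of 0 1 3 2 4 5]) (auto simp: perm6_def lt6)
  have h123: "A.vanS {0,1,2,4} \<or> A.vanS {0,1,3,4} \<or> A.vanS {0,1,4,5} \<or> B.vanS {0,2,3,5} \<or> B.vanS {1,2,3,5} \<or> B.vanS {2,3,4,5}"
    by (rule L3_set[OF D, of 0 1 4 2 3 5]) (auto simp: perm6_def lt6)
  have h124: "A.vanS {0,1,2,5} \<or> A.vanS {0,1,3,5} \<or> A.vanS {0,1,4,5} \<or> B.vanS {0,2,3,4} \<or> B.vanS {1,2,3,4} \<or> B.vanS {2,3,4,5}"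
    by (rule L3_set[OF D, of 0 1 5 2 3 4]) (auto simp: perm6_def lt6)
  have h125: "A.vanS {0,1,2,3} \<or> A.vanS {0,2,3,4} \<or> A.vanS {0,2,3,5} \<or> B.vanS {0,1,4,5} \<or> B.vanS {1,2,4,5} \<or> B.vanS {1,3,4,5}"
    by (rule L3_set[OF D, of 0 2 3 1 4 5]) (auto simp: perm6_def lt6)
  have h126: "A.vanS {0,1,2,4} \<or> A.vanS {0,2,3,4} \<or> A.vanS {0,2,4,5} \<or> B.vanS {0,1,3,5} \<or> B.vanS {1,2,3,5} \<or> B.vanS {1,3,4,5}"
    by (rule L3_set[OF D, of 0 2 4 1 3 5]) (auto simp: perm6_def lt6)
  have h127: "A.vanS {0,1,2,5} \<or> A.vanS {0,2,3,5} \<or> A.vanS {0,2,4,5} \<or> B.vanS {0,1,3,4} \<or> B.vanS {1,2,3,4} \<or> B.vanS {1,3,4,5}"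
    by (rule L3_set[OF D, of 0 2 5 1 3 4]) (auto simp: perm6_def lt6)
  have h128: "A.vanS {0,1,3,4} \<or> A.vanS {0,2,3,4} \<or> A.vanS {0,3,4,5} \<or> B.vanS {0,1,2,5} \<or> B.vanS {1,2,3,5} \<or> B.vanS {1,2,4,5}"
    by (rule L3_set[OF D, of 0 3 4 1 2 5]) (auto simp: perm6_def lt6)
  have h129: "A.vanS {0,1,3,5} \<or> A.vanS {0,2,3,5} \<or> A.vanS {0,3,4,5} \<or> B.vanS {0,1,2,4} \<or> B.vanS {1,2,3,4} \<or> B.vanS {1,2,4,5}"
    by (rule L3_set[OF D, of 0 3 5 1 2 4]) (auto simp: perm6_def lt6)
  have h130: "A.vanS {0,1,4,5} \<or> A.vanS {0,2,4,5} \<or> A.vanS {0,3,4,5} \<or> B.vanS {0,1,2,3} \<or> B.vanS {1,2,3,4} \<or> B.vanS {1,2,3,5}"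
    by (rule L3_set[OF D, of 0 4 5 1 2 3]) (auto simp: perm6_def lt6)
  have h131: "A.vanS {0,1,2,3} \<or> A.vanS {1,2,3,4} \<or> A.vanS {1,2,3,5} \<or> B.vanS {0,1,4,5} \<or> B.vanS {0,2,4,5} \<or> B.vanS {0,3,4,5}"
    by (rule L3_set[OF D, of 1 2 3 0 4 5]) (auto simp: perm6_def lt6)
  have h132: "A.vanS {0,1,2,4} \<or> A.vanS {1,2,3,4} \<or> A.vanS {1,2,4,5} \<or> B.vanS {0,1,3,5} \<or> B.vanS {0,2,3,5} \<or> B.vanS {0,3,4,5}"
    by (rule L3_set[OF D, of 1 2 4 0 3 5]) (auto simp: perm6_def lt6)
  have h133: "A.vanS {0,1,2,5} \<or> A.vanS {1,2,3,5} \<or> A.vanS {1,2,4,5} \<or> B.vanS {0,1,3,4} \<or> B.vanS {0,2,3,4} \<or> B.vanS {0,3,4,5}"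
    by (rule L3_set[OF D, of 1 2 5 0 3 4]) (auto simp: perm6_def lt6)
  have h134: "A.vanS {0,1,3,4} \<or> A.vanS {1,2,3,4} \<or> A.vanS {1,3,4,5} \<or> B.vanS {0,1,2,5} \<or> B.vanS {0,2,3,5} \<or> B.vanS {0,2,4,5}"
    by (rule L3_set[OF D, of 1 3 4 0 2 5]) (auto simp: perm6_def lt6)
  have h135: "A.vanS {0,1,3,5} \<or> A.vanS {1,2,3,5} \<or> A.vanS {1,3,4,5} \<or> B.vanS {0,1,2,4} \<or> B.vanS {0,2,3,4} \<or> B.vanS {0,2,4,5}"
    by (rule L3_set[OF D, of 1 3 5 0 2 4]) (auto simp: perm6_def lt6)
  have h136: "A.vanS {0,1,4,5} \<or> A.vanS {1,2,4,5} \<or> A.vanS {1,3,4,5} \<or> B.vanS {0,1,2,3} \<or> B.vanS {0,2,3,4} \<or> B.vanS {0,2,3,5}"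
    by (rule L3_set[OF D, of 1 4 5 0 2 3]) (auto simp: perm6_def lt6)
  have h137: "A.vanS {0,2,3,4} \<or> A.vanS {1,2,3,4} \<or> A.vanS {2,3,4,5} \<or> B.vanS {0,1,2,5} \<or> B.vanS {0,1,3,5} \<or> B.vanS {0,1,4,5}"
    by (rule L3_set[OF D, of 2 3 4 0 1 5]) (auto simp: perm6_def lt6)
  have h138: "A.vanS {0,2,3,5} \<or> A.vanS {1,2,3,5} \<or> A.vanS {2,3,4,5} \<or> B.vanS {0,1,2,4} \<or> B.vanS {0,1,3,4} \<or> B.vanS {0,1,4,5}"
    by (rule L3_set[OF D, of 2 3 5 0 1 4]) (auto simp: perm6_def lt6)
  have h139: "A.vanS {0,2,4,5} \<or> A.vanS {1,2,4,5} \<or> A.vanS {2,3,4,5} \<or> B.vanS {0,1,2,3} \<or> B.vanS {0,1,3,4} \<or> B.vanS {0,1,3,5}"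
    by (rule L3_set[OF D, of 2 4 5 0 1 3]) (auto simp: perm6_def lt6)
  have h140: "A.vanS {0,3,4,5} \<or> A.vanS {1,3,4,5} \<or> A.vanS {2,3,4,5} \<or> B.vanS {0,1,2,3} \<or> B.vanS {0,1,2,4} \<or> B.vanS {0,1,2,5}"
    by (rule L3_set[OF D, of 3 4 5 0 1 2]) (auto simp: perm6_def lt6)
  show False by (rule comb[OF h1 h2 h3 h4 h5 h6 h7 h8 h9 h10 h11 h12 h13 h14 h15 h16 h17 h18 h19 h20 h21 h22 h23 h24 h25 h26 h27 h28 h29 h30 h31 h32 h33 h34 h35 h36 h37 h38 h39 h40 h41 h42 h43 h44 h45 h46 h47 h48 h49 h50 h51 h52 h53 h54 h55 h56 h57 h58 h59 h60 h61 h62 h63 h64 h65 h66 h67 h68 h69 h70 h71 h72 h73 h74 h75 h76 h77 h78 h79 h80 h81 h82 h83 h84 h85 h86 h87 h88 h89 h90 h91 h92 h93 h94 h95 h96 h97 h98 h99 h100 h101 h102 h103 h104 h105 h106 h107 h108 h109 h110 h111 h112 h113 h114 h115 h116 h117 h118 h119 h120 h121 h122 h123 h124 h125 h126 h127 h128 h129 h130 h131 h132 h133 h134 h135 h136 h137 h138 h139 h140])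
qed



lemma pat_of_supp:
  assumes "supp (s::'a::field tensor3) = supp (matmul222 :: 'a tensor3)"
  shows "s ((a,b),(c,d),(e,f)) \<noteq> 0 \<longleftrightarrow> (b = c \<and> d = e \<and> f = a)"
proof -
  have "((a,b),(c,d),(e,f)) \<in> supp s \<longleftrightarrow> ((a,b),(c,d),(e,f)) \<in> supp (matmul222 :: 'a tensor3)"
    using assms by simp
  then have "s ((a,b),(c,d),(e,f)) \<noteq> 0 \<longleftrightarrow> (matmul222 :: 'a tensor3) ((a,b),(c,d),(e,f)) \<noteq> 0"
    unfolding supp_def by simp
  then show ?thesis unfolding matmul222_def by simp
qed

lemma no_small:
  assumes S: "supp (s::'a::field tensor3) = supp (matmul222 :: 'a tensor3)"
    and D: "s = sum_simple r u v w" and r: "r \<le> 6"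
  shows False
proof -
  define u' where "u' l = (if l < r then u l else (\<lambda>_. 0))" for l
  have "dec6 s u' v w"
  proof
    fix a b c d e f show "s ((a,b),(c,d),(e,f)) \<noteq> 0 \<longleftrightarrow> (b = c \<and> d = e \<and> f = a)"
      by (rule pat_of_supp[OF S])
  next
    fix x y z
    have "(\<Sum>l<6. u' l x * v l y * w l z) = (\<Sum>l<6. if l < r then u l x * v l y * w l z else 0)"
      by (rule sum.cong) (auto simp: u'_def)
    also have "\<dots> = sum (\<lambda>l. u l x * v l y * w l z) {l \<in> {..<6}. l < r}"
      by (rule sum.inter_filter[symmetric]) simp
    also have "{l \<in> {..<6}. l < r} = {..<r}" using r by auto
    finally show "s (x,y,z) = (\<Sum>l<6. u' l x * v l y * w l z)"
      unfolding D sum_simple_def by simp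
  qed
  then show False by (rule no6)
qed

lemma unidx_idx: "unidx (idx x) = x"
  by (cases x) (auto simp: idx_def unidx_def)

lemma idx_lt: "idx x < 4"
  by (auto simp: idx_def)

definition dec2 :: "nat \<Rightarrow> midx \<times> midx" where "dec2 l = (unidx (l div 4), unidx (l mod 4))"

lemma bij_dec2: "bij_betw dec2 {..<16} UNIV"
proof (rule bij_betw_byWitness[where f' = "\<lambda>(x,y). 4 * idx x + idx y"])
  show "\<forall>a\<in>{..<16}. (case dec2 a of (x, y) \<Rightarrow> 4 * idx x + idx y) = a"
  proof
    fix l :: nat assume "l \<in> {..<16}"
    then have "l div 4 < 4" "l mod 4 < 4" by auto
    then show "(case dec2 l of (x, y) \<Rightarrow> 4 * idx x + idx y) = l"
      unfolding dec2_def by (simp add: idx_unidx)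
  qed
  show "\<forall>a'\<in>UNIV. dec2 (case a' of (x, y) \<Rightarrow> 4 * idx x + idx y) = a'"
  proof
    fix p :: "midx \<times> midx"
    obtain x y where p: "p = (x,y)" by (cases p)
    have "(4 * idx x + idx y) div 4 = idx x" "(4 * idx x + idx y) mod 4 = idx y" using idx_lt[of y] by auto
    then show "dec2 (case p of (x, y) \<Rightarrow> 4 * idx x + idx y) = p" unfolding p dec2_def by (simp add: unidx_idx)
  qed
  show "dec2 ` {..<16} \<subseteq> UNIV" by simp
  have "4 * idx x + idx y < 16" for x y using idx_lt[of x] idx_lt[of y] by simp
  then show "(\<lambda>(x, y). 4 * idx x + idx y) ` UNIV \<subseteq> {..<16}" by auto
qed

lemma exists_dec: "\<exists>r u v w. (s::'a::field tensor3) = sum_simple r u v w"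
proof -
  define u where "u l = (E (fst (dec2 l)) :: midx \<Rightarrow> 'a)" for l
  define v where "v l = (E (snd (dec2 l)) :: midx \<Rightarrow> 'a)" for l
  define w where "w l = (\<lambda>z. s (fst (dec2 l), snd (dec2 l), z))" for l
  have "s = sum_simple 16 u v w"
  proof (rule ext, clarify)
    fix x y z
    have "sum_simple 16 u v w (x,y,z) = (\<Sum>l<16. (\<lambda>p. E (fst p) x * E (snd p) y * s (fst p, snd p, z)) (dec2 l))"
      unfolding sum_simple_def u_def v_def w_def by simp
    also have "\<dots> = (\<Sum>p\<in>UNIV. E (fst p) x * E (snd p) y * s (fst p, snd p, z))"
      by (rule sum.reindex_bij_betw[OF bij_dec2])
    also have "\<dots> = (\<Sum>p\<in>UNIV. if p = (x,y) then s (x, y, z) else 0)"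
      by (rule sum.cong) (auto simp: E_def)
    also have "\<dots> = s (x,y,z)" by simp
    finally show "s (x,y,z) = sum_simple 16 u v w (x,y,z)" by simp
  qed
  then show ?thesis by blast
qed

lemma rank_ge7:
  assumes S: "supp (s::'a::field tensor3) = supp (matmul222 :: 'a tensor3)"
  shows "7 \<le> tensor_rank s"
proof (rule ccontr)
  assume "\<not> 7 \<le> tensor_rank s"
  then have r: "tensor_rank s \<le> 6" by simp
  have "\<exists>u v w. s = sum_simple (tensor_rank s) u v w"
    unfolding tensor_rank_def by (rule LeastI_ex) (use exists_dec in blast)
  then show False using no_small[OF S _ r] by blast
qed

definition vec4 :: "'a \<Rightarrow> 'a \<Rightarrow> 'a \<Rightarrow> 'a \<Rightarrow> midx \<Rightarrow> 'a" where
  "vec4 a b c d x = (if fst x then (if snd x then d else c) else (if snd x then b else a))"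

definition uS :: "nat \<Rightarrow> midx \<Rightarrow> 'a::field" where
  "uS l = (if l = 0 then vec4 1 0 0 1 else if l = 1 then vec4 0 0 1 1 else if l = 2 then vec4 1 0 0 0 else
           if l = 3 then vec4 0 0 0 1 else if l = 4 then vec4 1 1 0 0 else if l = 5 then vec4 (-1) 0 1 0 else vec4 0 1 0 (-1))"
definition vS :: "nat \<Rightarrow> midx \<Rightarrow> 'a::field" where
  "vS l = (if l = 0 then vec4 1 0 0 1 else if l = 1 then vec4 1 0 0 0 else if l = 2 then vec4 0 1 0 (-1) else
           if l = 3 then vec4 (-1) 0 1 0 else if l = 4 then vec4 0 0 0 1 else if l = 5 then vec4 1 1 0 0 else vec4 0 0 1 1)"
definition wS :: "nat \<Rightarrow> midx \<Rightarrow> 'a::field" where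
  "wS l = (if l = 0 then vec4 1 0 0 1 else if l = 1 then vec4 0 1 0 (-1) else if l = 2 then vec4 0 0 1 1 else
           if l = 3 then vec4 1 1 0 0 else if l = 4 then vec4 (-1) 0 1 0 else if l = 5 then vec4 0 0 0 1 else vec4 1 0 0 0)"

lemma sum7: "(\<Sum>l<7::nat. g l) = g 0 + g 1 + g 2 + g 3 + g 4 + g 5 + g 6"
  by (simp add: eval_nat_numeral lessThan_Suc add.commute add.left_commute)

lemma strassen: "(matmul222 :: 'a::field tensor3) = sum_simple 7 uS vS wS"
proof (rule ext, clarify)
  fix a b c d e f
  have "sum_simple 7 uS vS wS ((a,b),(c,d),(e,f)) =
     (\<Sum>l<7. (uS l (a,b) :: 'a) * vS l (c,d) * wS l (e,f))" unfolding sum_simple_def by simp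
  also have "\<dots> = (matmul222 :: 'a tensor3) ((a,b),(c,d),(e,f))"
    unfolding sum7 uS_def vS_def wS_def matmul222_def
    by (cases a; cases b; cases c; cases d; cases e; cases f) (simp_all add: vec4_def)
  finally show "(matmul222 :: 'a tensor3) ((a,b),(c,d),(e,f)) = sum_simple 7 uS vS wS ((a,b),(c,d),(e,f))" by simp
qed

lemma rank_matmul: "tensor_rank (matmul222 :: 'a::field tensor3) = 7"
  unfolding tensor_rank_def
proof (rule Least_equality)
  show "\<exists>u v w. (matmul222 :: 'a tensor3) = sum_simple 7 u v w" using strassen by blast
next
  fix y assume "\<exists>u v w. (matmul222 :: 'a tensor3) = sum_simple y u v w"
  then obtain u v w where "(matmul222 :: 'a tensor3) = sum_simple y u v w" by blast
  then show "7 \<le> y" using no_small[OF refl, of y u v w] by (cases "y \<le> 6") auto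
qed

theorem theorem1:
  shows "support_rank (matmul222 :: 'a::field tensor3) = 7"
  unfolding support_rank_def
proof (rule Least_equality)
  show "\<exists>s :: 'a tensor3. supp s = supp (matmul222 :: 'a tensor3) \<and> tensor_rank s = 7"
    by (rule exI[of _ "matmul222 :: 'a tensor3"]) (simp add: rank_matmul)
next
  fix y assume "\<exists>s :: 'a tensor3. supp s = supp (matmul222 :: 'a tensor3) \<and> tensor_rank s = y"
  then obtain s :: "'a tensor3" where "supp s = supp (matmul222 :: 'a tensor3)" "tensor_rank s = y" by blast
  then show "7 \<le> y" using rank_ge7 by blast
qed


end
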